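(* Let $3\leq d_A\leq d_B\leq d_C$ be integers and consider the tripartite system $\mathbb{C}^{d_A}\otimes\mathbb{C}^{d_B}\otimes\mathbb{C}^{d_C}$. Then the set of (unnormalized) product states $\mathcal{U}=\bigcup_{i=1}^3(\mathcal{A}_i\cup\mathcal{B}_i)\cup\mathcal{F}\cup\{|S\rangle\}$ defined in the context is an unextendible product basis of size $d_Ad_Bd_C-8$.
   Context: $\{|0\rangle,\dots,|d_X-1\rangle\}$ is the computational basis of party $X\in\{A,B,C\}$, $\mathbb{Z}_n=\{0,1,\dots,n-1\}$, and $w_n=e^{2\pi\sqrt{-1}/n}$. For $X\in\{A,B,C\}$ define $|\eta_s\rangle_X=\sum_{t=0}^{d_X-2}w_{d_X-1}^{st}|t\rangle_X$ and $|\xi_s\rangle_X=\sum_{t=0}^{d_X-2}w_{d_X-1}^{st}|t+1\rangle_X$ for $s\in\mathbb{Z}_{d_X-1}$, and $|\beta_s\rangle_X=\sum_{t=0}^{d_X-3}w_{d_X-2}^{st}|t+1\rangle_X$ for $s\in\mathbb{Z}_{d_X-2}$. Define $\mathcal{A}_1=\{|\xi_i\rangle_A|0\rangle_B|\eta_k\rangle_C:(i,k)\in\mathbb{Z}_{d_A-1}\times\mathbb{Z}_{d_C-1}\setminus\{(0,0)\}\}$, $\mathcal{A}_2=\{|\xi_i\rangle_A|\eta_j\rangle_B|d_C-1\rangle_C:(i,j)\in\mathbb{Z}_{d_A-1}\times\mathbb{Z}_{d_B-1}\setminus\{(0,0)\}\}$, $\mathcal{A}_3=\{|d_A-1\rangle_A|\xi_j\rangle_B|\eta_k\rangle_C:(j,k)\in\mathbb{Z}_{d_B-1}\times\mathbb{Z}_{d_C-1}\setminus\{(0,0)\}\}$,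 $\mathcal{B}_1=\{|\eta_i\rangle_A|d_B-1\rangle_B|\xi_k\rangle_C:(i,k)\in\mathbb{Z}_{d_A-1}\times\mathbb{Z}_{d_C-1}\setminus\{(0,0)\}\}$, $\mathcal{B}_2=\{|\eta_i\rangle_A|\xi_j\rangle_B|0\rangle_C:(i,j)\in\mathbb{Z}_{d_A-1}\times\mathbb{Z}_{d_B-1}\setminus\{(0,0)\}\}$, $\mathcal{B}_3=\{|0\rangle_A|\eta_j\rangle_B|\xi_k\rangle_C:(j,k)\in\mathbb{Z}_{d_B-1}\times\mathbb{Z}_{d_C-1}\setminus\{(0,0)\}\}$, $\mathcal{F}=\{|\beta_i\rangle_A|\beta_j\rangle_B|\beta_k\rangle_C:(i,j,k)\in\mathbb{Z}_{d_A-2}\times\mathbb{Z}_{d_B-2}\times\mathbb{Z}_{d_C-2}\setminus\{(0,0,0)\}\}$, and the "stopper" state $|S\rangle=(\sum_{i=0}^{d_A-1}|i\rangle)_A(\sum_{j=0}^{d_B-1}|j\rangle)_B(\sum_{k=0}^{d_C-1}|k\rangle)_C$. An unextendible product basis (UPB) of a multipartite system is a set of mutually orthogonal product states, not spanning the whole space, whose orthogonal complement contains no (fully) product state. *)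

theory Defs
  imports Complex_Main
begin

text \<open>Vectors of \<open>C^d\<close> are functions \<open>nat \<Rightarrow> complex\<close> vanishing outside \<open>{..<d}\<close>;
  vectors of \<open>C^dA \<otimes> C^dB \<otimes> C^dC\<close> are functions \<open>nat \<Rightarrow> nat \<Rightarrow> nat \<Rightarrow> complex\<close>
  vanishing outside \<open>{..<dA} \<times> {..<dB} \<times> {..<dC}\<close> (coefficients in the computational basis).\<close>

definition cvec :: "nat \<Rightarrow> (nat \<Rightarrow> complex) set" where
  "cvec d = {v. \<forall>i. d \<le> i \<longrightarrow> v i = 0}"

definition tspace :: "nat \<Rightarrow> nat \<Rightarrow> nat \<Rightarrow> (nat \<Rightarrow> nat \<Rightarrow> nat \<Rightarrow> complex) set" where
  "tspace dA dB dC = {v. \<forall>a b c. (dA \<le> a \<or> dB \<le> b \<or> dC \<le> c) \<longrightarrow> v a b c = 0}"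

definition prod3 :: "(nat \<Rightarrow> complex) \<Rightarrow> (nat \<Rightarrow> complex) \<Rightarrow> (nat \<Rightarrow> complex) \<Rightarrow> nat \<Rightarrow> nat \<Rightarrow> nat \<Rightarrow> complex" where
  "prod3 x y z = (\<lambda>a b c. x a * y b * z c)"

definition tinner :: "nat \<Rightarrow> nat \<Rightarrow> nat \<Rightarrow> (nat \<Rightarrow> nat \<Rightarrow> nat \<Rightarrow> complex) \<Rightarrow> (nat \<Rightarrow> nat \<Rightarrow> nat \<Rightarrow> complex) \<Rightarrow> complex" where
  "tinner dA dB dC u v = (\<Sum>a<dA. \<Sum>b<dB. \<Sum>c<dC. cnj (u a b c) * v a b c)"

definition product_state :: "nat \<Rightarrow> nat \<Rightarrow> nat \<Rightarrow> (nat \<Rightarrow> nat \<Rightarrow> nat \<Rightarrow> complex) \<Rightarrow> bool" where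
  "product_state dA dB dC v \<longleftrightarrow> v \<noteq> (\<lambda>a b c. 0) \<and>
     (\<exists>x y z. x \<in> cvec dA \<and> y \<in> cvec dB \<and> z \<in> cvec dC \<and> v = prod3 x y z)"

definition tspan :: "(nat \<Rightarrow> nat \<Rightarrow> nat \<Rightarrow> complex) set \<Rightarrow> (nat \<Rightarrow> nat \<Rightarrow> nat \<Rightarrow> complex) set" where
  "tspan U = {v. \<exists>f. v = (\<lambda>a b c. \<Sum>u\<in>U. f u * u a b c)}"

definition is_UPB :: "nat \<Rightarrow> nat \<Rightarrow> nat \<Rightarrow> (nat \<Rightarrow> nat \<Rightarrow> nat \<Rightarrow> complex) set \<Rightarrow> bool" where
  "is_UPB dA dB dC U \<longleftrightarrow>
     finite U \<and>
     (\<forall>u\<in>U. product_state dA dB dC u) \<and>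
     (\<forall>u\<in>U. \<forall>v\<in>U. u \<noteq> v \<longrightarrow> tinner dA dB dC u v = 0) \<and>
     \<not> (tspace dA dB dC \<subseteq> tspan U) \<and>
     (\<forall>v. product_state dA dB dC v \<longrightarrow> \<not> (\<forall>u\<in>U. tinner dA dB dC u v = 0))"

definition root_unity :: "nat \<Rightarrow> complex" where
  "root_unity n = cis (2 * pi / real n)"

definition ket :: "nat \<Rightarrow> nat \<Rightarrow> complex" where
  "ket t = (\<lambda>i. if i = t then 1 else 0)"

definition eta :: "nat \<Rightarrow> nat \<Rightarrow> nat \<Rightarrow> complex" where
  "eta d s = (\<lambda>i. \<Sum>t\<in>{0..d-2}. root_unity (d-1) ^ (s*t) * ket t i)"

definition xi :: "nat \<Rightarrow> nat \<Rightarrow> nat \<Rightarrow> complex" where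
  "xi d s = (\<lambda>i. \<Sum>t\<in>{0..d-2}. root_unity (d-1) ^ (s*t) * ket (t+1) i)"

definition beta :: "nat \<Rightarrow> nat \<Rightarrow> nat \<Rightarrow> complex" where
  "beta d s = (\<lambda>i. \<Sum>t\<in>{0..d-3}. root_unity (d-2) ^ (s*t) * ket (t+1) i)"

definition allones :: "nat \<Rightarrow> nat \<Rightarrow> complex" where
  "allones d = (\<lambda>i. \<Sum>t<d. ket t i)"

definition UPB_set :: "nat \<Rightarrow> nat \<Rightarrow> nat \<Rightarrow> (nat \<Rightarrow> nat \<Rightarrow> nat \<Rightarrow> complex) set" where
  "UPB_set dA dB dC =
     {prod3 (xi dA i) (ket 0) (eta dC k) | i k. i < dA - 1 \<and> k < dC - 1 \<and> (i, k) \<noteq> (0, 0)} \<union>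
     {prod3 (xi dA i) (eta dB j) (ket (dC - 1)) | i j. i < dA - 1 \<and> j < dB - 1 \<and> (i, j) \<noteq> (0, 0)} \<union>
     {prod3 (ket (dA - 1)) (xi dB j) (eta dC k) | j k. j < dB - 1 \<and> k < dC - 1 \<and> (j, k) \<noteq> (0, 0)} \<union>
     {prod3 (eta dA i) (ket (dB - 1)) (xi dC k) | i k. i < dA - 1 \<and> k < dC - 1 \<and> (i, k) \<noteq> (0, 0)} \<union>
     {prod3 (eta dA i) (xi dB j) (ket 0) | i j. i < dA - 1 \<and> j < dB - 1 \<and> (i, j) \<noteq> (0, 0)} \<union>
     {prod3 (ket 0) (eta dB j) (xi dC k) | j k. j < dB - 1 \<and> k < dC - 1 \<and> (j, k) \<noteq> (0, 0)} \<union>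
     {prod3 (beta dA i) (beta dB j) (beta dC k) | i j k.
        i < dA - 2 \<and> j < dB - 2 \<and> k < dC - 2 \<and> (i, j, k) \<noteq> (0, 0, 0)} \<union>
     {prod3 (allones dA) (allones dB) (allones dC)}"

end

theory Submission
  imports Defs
begin

lemma ru_pow_n: "n \<ge> 1 \<Longrightarrow> root_unity n ^ n = 1"
  by (simp add: root_unity_def DeMoivre)

lemma ru_norm: "norm (root_unity n) = 1"
  by (simp add: root_unity_def)

lemma ru_pow_ne1:
  assumes "0 < k" "k < n" shows "root_unity n ^ k \<noteq> 1"
proof
  assume h: "root_unity n ^ k = 1"
  have inj: "inj_on (\<lambda>k. cis (2 * pi * real k / real n)) {..<n}"
    using bij_betw_roots_unity[of n] assms by (auto simp: bij_betw_def)
  have "cis (2 * pi * real k / real n) = root_unity n ^ k"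
    by (simp add: root_unity_def DeMoivre mult_ac)
  also have "\<dots> = cis (2 * pi * real 0 / real n)" using h by simp
  finally have eq: "cis (2 * pi * real k / real n) = cis (2 * pi * real 0 / real n)" .
  have "k = 0" using inj_onD[OF inj eq] assms by auto
  then show False using assms by simp
qed

lemma ru_pow_mod: "n \<ge> 1 \<Longrightarrow> root_unity n ^ k = root_unity n ^ (k mod n)"
proof -
  assume n: "n \<ge> 1"
  have "root_unity n ^ k = root_unity n ^ (n * (k div n) + k mod n)" by simp
  also have "\<dots> = (root_unity n ^ n) ^ (k div n) * root_unity n ^ (k mod n)"
    by (simp only: power_add power_mult)
  finally show ?thesis using ru_pow_n[OF n] by simp
qed

lemma ru_sum_zero:
  assumes n: "n \<ge> 1" and k: "\<not> n dvd k"
  shows "(\<Sum>t<n. root_unity n ^ (k * t)) = 0"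
proof -
  let ?q = "root_unity n ^ k"
  have q1: "?q \<noteq> 1"
    using ru_pow_mod[OF n, of k] ru_pow_ne1[of "k mod n" n] n k
    by (metis dvd_eq_mod_eq_0 mod_less_divisor neq0_conv not_one_le_zero)
  have qn: "?q ^ n = 1"
    by (metis ru_pow_n[OF n] power_mult power_mult_distrib mult.commute power_one)
  have "(\<Sum>t<n. root_unity n ^ (k * t)) = (\<Sum>t<n. ?q ^ t)"
    by (simp add: power_mult)
  also have "\<dots> = (?q ^ n - 1) / (?q - 1)" using q1 by (simp add: geometric_sum)
  also have "\<dots> = 0" using qn by simp
  finally show ?thesis .
qed

lemma ru_cnj: "cnj (root_unity n ^ m) = inverse (root_unity n ^ m)"
proof -
  have "norm (root_unity n ^ m) = 1" by (simp add: norm_power ru_norm)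
  then have "root_unity n ^ m * cnj (root_unity n ^ m) = 1"
    using complex_norm_square[of "root_unity n ^ m"] by simp
  then show ?thesis using inverse_unique by metis
qed

definition G :: "nat \<Rightarrow> (nat \<Rightarrow> complex) \<Rightarrow> nat \<Rightarrow> complex" where
  "G n f i = (\<Sum>t<n. cnj (root_unity n ^ (i * t)) * f t)"

lemma ru_cnj_mult:
  assumes n: "n \<ge> 1" and i: "i \<le> n"
  shows "cnj (root_unity n ^ (i * t)) * root_unity n ^ (j * t) = root_unity n ^ ((n - i + j) * t)"
proof -
  have nz: "root_unity n \<noteq> 0" using ru_norm[of n] by auto
  have ex: "(n - i + j) * t + i * t = (n + j) * t"
  proof -
    have "n - i + j + i = n + j" using i by simp
    then show ?thesis by (metis add_mult_distrib)
  qed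
  have "root_unity n ^ ((n - i + j) * t) * root_unity n ^ (i * t) = root_unity n ^ ((n + j) * t)"
    by (simp only: power_add[symmetric] ex)
  also have "\<dots> = (root_unity n ^ n) ^ t * root_unity n ^ (j * t)"
    by (simp add: power_add power_mult algebra_simps)
  also have "\<dots> = root_unity n ^ (j * t)" using ru_pow_n[OF n] by simp
  finally have e: "root_unity n ^ ((n - i + j) * t) * root_unity n ^ (i * t) = root_unity n ^ (j * t)" .
  show ?thesis unfolding ru_cnj using nz e[symmetric]
    by (simp add: field_simps)
qed

lemma ortho:
  assumes n: "n \<ge> 1" and i: "i < n" and j: "j < n"
  shows "(\<Sum>t<n. cnj (root_unity n ^ (i * t)) * root_unity n ^ (j * t)) = (if i = j then of_nat n else 0)"
proof (cases "i = j")
  case True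
  have "cnj (root_unity n ^ (i * t)) * root_unity n ^ (i * t) = 1" for t
  proof -
    have "norm (root_unity n ^ (i * t)) = 1" by (simp add: norm_power ru_norm)
    then show ?thesis by (metis complex_norm_square mult.commute of_real_1 power_one)
  qed
  then show ?thesis using True by simp
next
  case False
  have nd: "\<not> n dvd (n - i + j)"
  proof
    assume "n dvd (n - i + j)"
    moreover have "0 < n - i + j" "n - i + j < 2 * n" using i j by auto
    ultimately have "n - i + j = n"
      by (metis dvd_div_mult_self less_mult_imp_div_less mult.commute nat_dvd_not_less
          One_nat_def div_less_iff_less_mult less_2_cases mult_eq_0_iff mult_1 neq0_conv zero_less_mult_pos2 add_gr_0)
    then show False using False i by simp
  qed
  have "(\<Sum>t<n. cnj (root_unity n ^ (i * t)) * root_unity n ^ (j * t)) = (\<Sum>t<n. root_unity n ^ ((n - i + j) * t))"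
    by (rule sum.cong[OF refl], rule ru_cnj_mult[OF n]) (use i in simp)
  then show ?thesis using False ru_sum_zero[OF n nd] by simp
qed

lemma G_cong: "(\<And>t. t < n \<Longrightarrow> f t = g t) \<Longrightarrow> G n f i = G n g i"
  unfolding G_def by (rule sum.cong) auto

lemma G_zero: "G n f 0 = (\<Sum>t<n. f t)"
  by (simp add: G_def)

lemma G_root:
  assumes "n \<ge> 1" "i < n" "j < n"
  shows "G n (\<lambda>t. root_unity n ^ (j * t)) i = (if i = j then of_nat n else 0)"
  unfolding G_def using ortho[OF assms] .

lemma G_const:
  assumes "n \<ge> 1" "0 < i" "i < n"
  shows "G n (\<lambda>t. c) i = 0"
proof -
  have "G n (\<lambda>t. root_unity n ^ (0 * t)) i = 0" using G_root[of n i 0] assms by simp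
  then have "(\<Sum>t<n. cnj (root_unity n ^ (i * t))) = 0" by (simp add: G_def)
  then show ?thesis by (simp add: G_def sum_distrib_right[symmetric])
qed

lemma G_inv:
  assumes n: "n \<ge> 1" and s: "s < n"
  shows "(\<Sum>i<n. root_unity n ^ (s * i) * G n f i) = of_nat n * f s"
proof -
  have "(\<Sum>i<n. root_unity n ^ (s * i) * G n f i)
      = (\<Sum>i<n. \<Sum>t<n. f t * (cnj (root_unity n ^ (t * i)) * root_unity n ^ (s * i)))"
    unfolding G_def by (simp add: sum_distrib_left mult_ac)
  also have "\<dots> = (\<Sum>t<n. f t * (\<Sum>i<n. cnj (root_unity n ^ (t * i)) * root_unity n ^ (s * i)))"
    by (subst sum.swap) (simp add: sum_distrib_left)
  also have "\<dots> = (\<Sum>t<n. f t * (if t = s then of_nat n else 0))"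
    by (rule sum.cong[OF refl]) (simp only: ortho[OF n _ s] lessThan_iff)
  also have "\<dots> = (\<Sum>t<n. if t = s then f s * of_nat n else 0)"
    by (rule sum.cong) auto
  also have "\<dots> = of_nat n * f s" using s by (simp add: mult_ac)
  finally show ?thesis .
qed

lemma G_all_zero:
  assumes n: "n \<ge> 1" and h: "\<And>i. i < n \<Longrightarrow> G n f i = 0" and s: "s < n"
  shows "f s = 0"
proof -
  have "of_nat n * f s = 0" using G_inv[OF n s, of f] h by simp
  then show ?thesis using n by simp
qed

lemma G_nonzero_const:
  assumes n: "n \<ge> 1" and h: "\<And>i. 0 < i \<Longrightarrow> i < n \<Longrightarrow> G n f i = 0" and s: "s < n"
  shows "f s = f 0"
proof -
  have e: "\<And>t. t < n \<Longrightarrow> of_nat n * f t = G n f 0"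
  proof -
    fix t assume t: "t < n"
    have "(\<Sum>i<n. root_unity n ^ (t * i) * G n f i) = (\<Sum>i\<in>{0}. root_unity n ^ (t * i) * G n f i)"
      by (rule sum.mono_neutral_right) (use n h in auto)
    then show "of_nat n * f t = G n f 0" using G_inv[OF n t, of f] by simp
  qed
  have "of_nat n * f s = of_nat n * f 0" using e[OF s] e[of 0] n by simp
  then show ?thesis using n by simp
qed

lemma L2:
  assumes n: "n \<ge> 1" and m: "m \<ge> 1"
    and h: "\<forall>i<n. \<forall>k<m. (i, k) \<noteq> (0, 0) \<longrightarrow> G n p i * G m q k = 0"
  shows "(\<forall>t<n. p t = 0) \<or> (\<forall>t<m. q t = 0) \<or> ((\<forall>t<n. p t = p 0) \<and> (\<forall>t<m. q t = q 0))"
proof (rule ccontr)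
  assume c: "\<not> ?thesis"
  then obtain i where i: "i < n" "G n p i \<noteq> 0" using G_all_zero[OF n, of p] by blast
  obtain k where k: "k < m" "G m q k \<noteq> 0" using c G_all_zero[OF m, of q] by blast
  have p0: "G n p i' = 0" if "0 < i'" "i' < n" for i'
    using h k that by fastforce
  have q0: "G m q k' = 0" if "0 < k'" "k' < m" for k'
    using h i that by fastforce
  have "\<forall>t<n. p t = p 0" using G_nonzero_const[OF n p0] by blast
  moreover have "\<forall>t<m. q t = q 0" using G_nonzero_const[OF m q0] by blast
  ultimately show False using c by blast
qed

lemma L3:
  assumes n: "n \<ge> 1" and m: "m \<ge> 1" and l: "l \<ge> 1"
    and h: "\<forall>i<n. \<forall>j<m. \<forall>k<l. (i, j, k) \<noteq> (0, 0, 0) \<longrightarrow> G n p i * G m q j * G l r k = 0"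
  shows "(\<forall>t<n. p t = 0) \<or> (\<forall>t<m. q t = 0) \<or> (\<forall>t<l. r t = 0) \<or>
     ((\<forall>t<n. p t = p 0) \<and> (\<forall>t<m. q t = q 0) \<and> (\<forall>t<l. r t = r 0))"
proof (rule ccontr)
  assume c: "\<not> ?thesis"
  then obtain i where i: "i < n" "G n p i \<noteq> 0" using G_all_zero[OF n, of p] by blast
  obtain j where j: "j < m" "G m q j \<noteq> 0" using c G_all_zero[OF m, of q] by blast
  obtain k where k: "k < l" "G l r k \<noteq> 0" using c G_all_zero[OF l, of r] by blast
  have p0: "G n p i' = 0" if "0 < i'" "i' < n" for i'
    using h j k that by fastforce
  have q0: "G m q j' = 0" if "0 < j'" "j' < m" for j'
    using h i k that by fastforce
  have r0: "G l r k' = 0" if "0 < k'" "k' < l" for k'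
    using h i j that by fastforce
  have "\<forall>t<n. p t = p 0" using G_nonzero_const[OF n p0] by blast
  moreover have "\<forall>t<m. q t = q 0" using G_nonzero_const[OF m q0] by blast
  moreover have "\<forall>t<l. r t = r 0" using G_nonzero_const[OF l r0] by blast
  ultimately show False using c by blast
qed

definition ip :: "nat \<Rightarrow> (nat \<Rightarrow> complex) \<Rightarrow> (nat \<Rightarrow> complex) \<Rightarrow> complex" where
  "ip d u v = (\<Sum>t<d. cnj (u t) * v t)"

lemma ip_cnj: "ip d u v = cnj (ip d v u)"
  by (simp add: ip_def mult.commute)

lemma triple_sum:
  fixes f g h :: "nat \<Rightarrow> complex"
  shows "(\<Sum>a<A. \<Sum>b<B. \<Sum>c<C. f a * g b * h c) = (\<Sum>a<A. f a) * (\<Sum>b<B. g b) * (\<Sum>c<C. h c)"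
proof -
  have "(\<Sum>a<A. \<Sum>b<B. \<Sum>c<C. f a * g b * h c) = (\<Sum>a<A. f a * (\<Sum>b<B. g b * (\<Sum>c<C. h c)))"
    by (simp add: sum_distrib_left mult.assoc)
  also have "\<dots> = (\<Sum>a<A. f a) * ((\<Sum>b<B. g b) * (\<Sum>c<C. h c))"
    by (simp only: sum_distrib_right)
  finally show ?thesis by (simp add: mult.assoc)
qed

lemma tinner_prod3:
  "tinner dA dB dC (prod3 u1 u2 u3) (prod3 x y z) = ip dA u1 x * ip dB u2 y * ip dC u3 z"
  unfolding tinner_def prod3_def ip_def
  using triple_sum[of "\<lambda>a. cnj (u1 a) * x a" "\<lambda>b. cnj (u2 b) * y b" "\<lambda>c. cnj (u3 c) * z c" dC dB dA]
  by (simp add: mult_ac)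

lemma ket_shift_sum:
  "(\<Sum>s\<in>{0..m}. g s * ket (s + k) t) = (if k \<le> t \<and> t \<le> m + k then g (t - k) else 0)"
proof (cases "k \<le> t")
  case True
  have "(\<Sum>s\<in>{0..m}. g s * ket (s + k) t) = (\<Sum>s\<in>{0..m}. if s = t - k then g s else 0)"
    by (rule sum.cong) (use True in \<open>auto simp: ket_def\<close>)
  also have "\<dots> = (if t - k \<in> {0..m} then g (t - k) else 0)" by (rule sum.delta) simp
  finally show ?thesis using True by auto
next
  case False
  have "(\<Sum>s\<in>{0..m}. g s * ket (s + k) t) = (\<Sum>s\<in>{0..m}. 0)"
    by (rule sum.cong) (use False in \<open>auto simp: ket_def\<close>)
  then show ?thesis using False by simp
qed

lemma xi_val: "2 \<le> d \<Longrightarrow> xi d i t = (if 1 \<le> t \<and> t \<le> d - 1 then root_unity (d - 1) ^ (i * (t - 1)) else 0)"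
  unfolding xi_def using ket_shift_sum[where g="\<lambda>s. root_unity (d - 1) ^ (i * s)" and m="d - 2" and k=1 and t=t] by auto

lemma eta_val: "eta d i t = (if t \<le> d - 2 then root_unity (d - 1) ^ (i * t) else 0)"
  unfolding eta_def using ket_shift_sum[where g="\<lambda>s. root_unity (d - 1) ^ (i * s)" and m="d - 2" and k=0 and t=t] by simp

lemma beta_val: "3 \<le> d \<Longrightarrow> beta d i t = (if 1 \<le> t \<and> t \<le> d - 2 then root_unity (d - 2) ^ (i * (t - 1)) else 0)"
  unfolding beta_def using ket_shift_sum[where g="\<lambda>s. root_unity (d - 2) ^ (i * s)" and m="d - 3" and k=1 and t=t] by auto

lemma allones_val: "allones d t = (if t < d then 1 else 0)"
proof -
  have "allones d t = (\<Sum>s\<in>{0..d - 1}. 1 * ket (s + 0) t)" if "d > 0"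
    unfolding allones_def using that by (intro sum.cong) (auto simp: ket_def)
  then show ?thesis using ket_shift_sum[where g="\<lambda>s. 1" and m="d - 1" and k=0 and t=t]
    by (cases "d = 0") (auto simp: allones_def ket_def)
qed

lemma ip_ket: "j < d \<Longrightarrow> ip d (ket j) x = x j"
proof -
  assume j: "j < d"
  have "ip d (ket j) x = (\<Sum>t<d. if t = j then x t else 0)"
    unfolding ip_def by (rule sum.cong) (auto simp: ket_def)
  also have "\<dots> = x j" using j by (simp add: sum.delta)
  finally show ?thesis .
qed

lemma ip_xi:
  assumes d: "3 \<le> d" shows "ip d (xi d i) x = G (d - 1) (\<lambda>t. x (Suc t)) i"
proof -
  have dd: "d = Suc (d - 1)" using d by simp
  have "ip d (xi d i) x = (\<Sum>t<Suc (d - 1). cnj (xi d i t) * x t)"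
    unfolding ip_def using dd by simp
  also have "\<dots> = cnj (xi d i 0) * x 0 + (\<Sum>t<d - 1. cnj (xi d i (Suc t)) * x (Suc t))"
    by (rule sum.lessThan_Suc_shift)
  also have "\<dots> = (\<Sum>t<d - 1. cnj (root_unity (d - 1) ^ (i * t)) * x (Suc t))"
    using d by (auto simp: xi_val intro!: sum.cong)
  finally show ?thesis by (simp add: G_def)
qed

lemma ip_eta:
  assumes d: "3 \<le> d" shows "ip d (eta d i) x = G (d - 1) x i"
proof -
  have dd: "d = Suc (d - 1)" using d by simp
  have "ip d (eta d i) x = (\<Sum>t<Suc (d - 1). cnj (eta d i t) * x t)"
    unfolding ip_def using dd by simp
  also have "\<dots> = (\<Sum>t<d - 1. cnj (eta d i t) * x t) + cnj (eta d i (d - 1)) * x (d - 1)"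
    by (rule sum.lessThan_Suc)
  also have "\<dots> = (\<Sum>t<d - 1. cnj (root_unity (d - 1) ^ (i * t)) * x t)"
    using d by (auto simp: eta_val intro!: sum.cong)
  finally show ?thesis by (simp add: G_def)
qed

lemma ip_beta:
  assumes d: "3 \<le> d" shows "ip d (beta d i) x = G (d - 2) (\<lambda>t. x (Suc t)) i"
proof -
  have dd: "d = Suc (Suc (d - 2))" using d by simp
  have "ip d (beta d i) x = (\<Sum>t<Suc (Suc (d - 2)). cnj (beta d i t) * x t)"
    unfolding ip_def using dd by simp
  also have "\<dots> = cnj (beta d i 0) * x 0 + (\<Sum>t<Suc (d - 2). cnj (beta d i (Suc t)) * x (Suc t))"
    by (rule sum.lessThan_Suc_shift)
  also have "\<dots> = (\<Sum>t<Suc (d - 2). cnj (beta d i (Suc t)) * x (Suc t))"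
    using d by (simp add: beta_val)
  also have "\<dots> = (\<Sum>t<d - 2. cnj (beta d i (Suc t)) * x (Suc t)) + cnj (beta d i (Suc (d - 2))) * x (Suc (d - 2))"
    by (rule sum.lessThan_Suc)
  also have "\<dots> = (\<Sum>t<d - 2. cnj (root_unity (d - 2) ^ (i * t)) * x (Suc t))"
    using d by (auto simp: beta_val intro!: sum.cong)
  finally show ?thesis by (simp add: G_def)
qed

lemma ip_ones: "ip d (allones d) x = (\<Sum>t<d. x t)"
  unfolding ip_def by (auto simp: allones_val intro!: sum.cong)

datatype desc = K0 | KT | Xi nat | Et nat | Be nat | On

fun vec :: "nat \<Rightarrow> desc \<Rightarrow> nat \<Rightarrow> complex" where
  "vec d K0 = ket 0"
| "vec d KT = ket (d - 1)"
| "vec d (Xi i) = xi d i"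
| "vec d (Et i) = eta d i"
| "vec d (Be i) = beta d i"
| "vec d On = allones d"

fun valid :: "nat \<Rightarrow> desc \<Rightarrow> bool" where
  "valid d (Xi i) = (i < d - 1)"
| "valid d (Et i) = (i < d - 1)"
| "valid d (Be i) = (i < d - 2)"
| "valid d _ = True"

fun orth1' :: "desc \<Rightarrow> desc \<Rightarrow> bool" where
  "orth1' K0 KT = True"
| "orth1' K0 (Xi _) = True"
| "orth1' K0 (Be _) = True"
| "orth1' KT (Et _) = True"
| "orth1' KT (Be _) = True"
| "orth1' (Xi i) (Xi j) = (i \<noteq> j)"
| "orth1' (Et i) (Et j) = (i \<noteq> j)"
| "orth1' (Be i) (Be j) = (i \<noteq> j)"
| "orth1' (Xi i) On = (i \<noteq> 0)"
| "orth1' (Et i) On = (i \<noteq> 0)"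
| "orth1' (Be i) On = (i \<noteq> 0)"
| "orth1' _ _ = False"

definition orth1 :: "desc \<Rightarrow> desc \<Rightarrow> bool" where
  "orth1 a b \<longleftrightarrow> orth1' a b \<or> orth1' b a"

lemma ip_orth1':
  assumes d: "3 \<le> d" and va: "valid d a" and vb: "valid d b" and o: "orth1' a b"
  shows "ip d (vec d a) (vec d b) = 0"
proof -
  have d1: "d - 1 \<ge> 1" "d - 2 \<ge> 1" using d by auto
  show ?thesis
  proof (cases a)
    case K0
    then show ?thesis using o d by (cases b; simp add: ip_ket xi_val beta_val; simp add: ket_def)
  next
    case KT
    then show ?thesis using o d by (cases b; simp add: ip_ket eta_val beta_val; simp add: ket_def; auto)
  next
    case (Xi i)
    show ?thesis
    proof (cases b)
      case (Xi j)
      have "G (d - 1) (\<lambda>t. xi d j (Suc t)) i = G (d - 1) (\<lambda>t. root_unity (d - 1) ^ (j * t)) i"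
        by (rule G_cong) (use d in \<open>auto simp add: xi_val\<close>)
      also have "\<dots> = 0" using G_root[OF d1(1), of i j] va vb o \<open>a = Xi i\<close> Xi by simp
      finally show ?thesis using \<open>a = Xi i\<close> Xi d by (simp add: ip_xi)
    next
      case On
      have "G (d - 1) (\<lambda>t. allones d (Suc t)) i = G (d - 1) (\<lambda>t. 1) i"
        by (rule G_cong) (use d in \<open>auto simp add: allones_val\<close>)
      also have "\<dots> = 0" using G_const[OF d1(1), of i] va o \<open>a = Xi i\<close> On by simp
      finally show ?thesis using \<open>a = Xi i\<close> On d by (simp add: ip_xi)
    qed (use o Xi in auto)
  next
    case (Et i)
    show ?thesis
    proof (cases b)
      case (Et j)
      have "G (d - 1) (eta d j) i = G (d - 1) (\<lambda>t. root_unity (d - 1) ^ (j * t)) i"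
        by (rule G_cong) (use d in \<open>auto simp add: eta_val\<close>)
      also have "\<dots> = 0" using G_root[OF d1(1), of i j] va vb o \<open>a = Et i\<close> Et by simp
      finally show ?thesis using \<open>a = Et i\<close> Et d by (simp add: ip_eta)
    next
      case On
      have "G (d - 1) (allones d) i = G (d - 1) (\<lambda>t. 1) i"
        by (rule G_cong) (use d in \<open>auto simp add: allones_val\<close>)
      also have "\<dots> = 0" using G_const[OF d1(1), of i] va o \<open>a = Et i\<close> On by simp
      finally show ?thesis using \<open>a = Et i\<close> On d by (simp add: ip_eta)
    qed (use o Et in auto)
  next
    case (Be i)
    show ?thesis
    proof (cases b)
      case (Be j)
      have "G (d - 2) (\<lambda>t. beta d j (Suc t)) i = G (d - 2) (\<lambda>t. root_unity (d - 2) ^ (j * t)) i"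
        by (rule G_cong) (use d in \<open>auto simp add: beta_val\<close>)
      also have "\<dots> = 0" using G_root[OF d1(2), of i j] va vb o \<open>a = Be i\<close> Be by simp
      finally show ?thesis using \<open>a = Be i\<close> Be d by (simp add: ip_beta)
    next
      case On
      have "G (d - 2) (\<lambda>t. allones d (Suc t)) i = G (d - 2) (\<lambda>t. 1) i"
        by (rule G_cong) (use d in \<open>auto simp add: allones_val\<close>)
      also have "\<dots> = 0" using G_const[OF d1(2), of i] va o \<open>a = Be i\<close> On by simp
      finally show ?thesis using \<open>a = Be i\<close> On d by (simp add: ip_beta)
    qed (use o Be in auto)
  next
    case On
    then show ?thesis using o by simp
  qed
qed

lemma ip_orth1:
  assumes "3 \<le> d" "valid d a" "valid d b" "orth1 a b"
  shows "ip d (vec d a) (vec d b) = 0"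
  using assms ip_orth1'[of d a b] ip_orth1'[of d b a] ip_cnj[of d "vec d a" "vec d b"]
  unfolding orth1_def by auto

definition mk :: "nat \<Rightarrow> nat \<Rightarrow> nat \<Rightarrow> desc \<times> desc \<times> desc \<Rightarrow> nat \<Rightarrow> nat \<Rightarrow> nat \<Rightarrow> complex" where
  "mk dA dB dC D = prod3 (vec dA (fst D)) (vec dB (fst (snd D))) (vec dC (snd (snd D)))"

definition P2 :: "nat \<Rightarrow> nat \<Rightarrow> (nat \<times> nat) set" where
  "P2 n m = {..<n} \<times> {..<m} - {(0, 0)}"
definition P3 :: "nat \<Rightarrow> nat \<Rightarrow> nat \<Rightarrow> (nat \<times> nat \<times> nat) set" where
  "P3 n m l = {..<n} \<times> {..<m} \<times> {..<l} - {(0, 0, 0)}"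

lemma P2_image: "(\<lambda>(i, k). g i k) ` P2 n m = {g i k | i k. i < n \<and> k < m \<and> (i, k) \<noteq> (0, 0)}"
  unfolding P2_def by auto
lemma P3_image: "(\<lambda>(i, j, k). g i j k) ` P3 n m l = {g i j k | i j k. i < n \<and> j < m \<and> k < l \<and> (i, j, k) \<noteq> (0, 0, 0)}"
proof (rule set_eqI, rule iffI)
  fix x assume "x \<in> (\<lambda>(i, j, k). g i j k) ` P3 n m l"
  then show "x \<in> {g i j k | i j k. i < n \<and> j < m \<and> k < l \<and> (i, j, k) \<noteq> (0, 0, 0)}"
    unfolding P3_def by auto
next
  fix x assume "x \<in> {g i j k | i j k. i < n \<and> j < m \<and> k < l \<and> (i, j, k) \<noteq> (0, 0, 0)}"
  then obtain i j k where "x = g i j k" "i < n" "j < m" "k < l" "(i, j, k) \<noteq> (0, 0, 0)" by blast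
  then show "x \<in> (\<lambda>(i, j, k). g i j k) ` P3 n m l"
    unfolding P3_def by (intro image_eqI[where x="(i, j, k)"]) auto
qed

definition Dset :: "nat \<Rightarrow> nat \<Rightarrow> nat \<Rightarrow> (desc \<times> desc \<times> desc) set" where
  "Dset dA dB dC =
     (\<lambda>(i, k). (Xi i, K0, Et k)) ` P2 (dA - 1) (dC - 1) \<union>
     (\<lambda>(i, j). (Xi i, Et j, KT)) ` P2 (dA - 1) (dB - 1) \<union>
     (\<lambda>(j, k). (KT, Xi j, Et k)) ` P2 (dB - 1) (dC - 1) \<union>
     (\<lambda>(i, k). (Et i, KT, Xi k)) ` P2 (dA - 1) (dC - 1) \<union>
     (\<lambda>(i, j). (Et i, Xi j, K0)) ` P2 (dA - 1) (dB - 1) \<union>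
     (\<lambda>(j, k). (K0, Et j, Xi k)) ` P2 (dB - 1) (dC - 1) \<union>
     (\<lambda>(i, j, k). (Be i, Be j, Be k)) ` P3 (dA - 2) (dB - 2) (dC - 2) \<union>
     {(On, On, On)}"

lemma img2: "mk dA dB dC ` ((\<lambda>(i, k). g i k) ` A) = (\<lambda>(i, k). mk dA dB dC (g i k)) ` A"
  unfolding image_comp by (rule image_cong) auto
lemma img3: "mk dA dB dC ` ((\<lambda>(i, j, k). g i j k) ` A) = (\<lambda>(i, j, k). mk dA dB dC (g i j k)) ` A"
  unfolding image_comp by (rule image_cong) auto

lemma UPB_eq: "UPB_set dA dB dC = mk dA dB dC ` Dset dA dB dC"
  unfolding UPB_set_def Dset_def image_Un img3
  unfolding img2
  unfolding P2_image P3_image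
  by (simp add: mk_def)

lemma P2_elim:
  assumes "x \<in> (\<lambda>(i, k). g i k) ` P2 n m"
  obtains i k where "x = g i k" "i < n" "k < m" "(i, k) \<noteq> (0, 0)"
proof -
  from assms obtain p where p: "p \<in> P2 n m" "x = (case p of (i, k) \<Rightarrow> g i k)" by blast
  obtain i k where pik: "p = (i, k)" by (cases p)
  show thesis by (rule that[of i k]) (use p pik in \<open>auto simp: P2_def\<close>)
qed
lemma P3_elim:
  assumes "x \<in> (\<lambda>(i, j, k). g i j k) ` P3 n m l"
  obtains i j k where "x = g i j k" "i < n" "j < m" "k < l" "(i, j, k) \<noteq> (0, 0, 0)"
proof -
  from assms obtain p where p: "p \<in> P3 n m l" "x = (case p of (i, j, k) \<Rightarrow> g i j k)" by blast
  obtain i j k where pik: "p = (i, j, k)" by (cases p)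
  show thesis by (rule that[of i j k]) (use p pik in \<open>auto simp: P3_def\<close>)
qed

lemma Dset_cases:
  assumes "D \<in> Dset dA dB dC"
  obtains (a1) i k where "D = (Xi i, K0, Et k)" "i < dA - 1" "k < dC - 1" "(i, k) \<noteq> (0, 0)"
  | (a2) i j where "D = (Xi i, Et j, KT)" "i < dA - 1" "j < dB - 1" "(i, j) \<noteq> (0, 0)"
  | (a3) j k where "D = (KT, Xi j, Et k)" "j < dB - 1" "k < dC - 1" "(j, k) \<noteq> (0, 0)"
  | (b1) i k where "D = (Et i, KT, Xi k)" "i < dA - 1" "k < dC - 1" "(i, k) \<noteq> (0, 0)"
  | (b2) i j where "D = (Et i, Xi j, K0)" "i < dA - 1" "j < dB - 1" "(i, j) \<noteq> (0, 0)"
  | (b3) j k where "D = (K0, Et j, Xi k)" "j < dB - 1" "k < dC - 1" "(j, k) \<noteq> (0, 0)"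
  | (f) i j k where "D = (Be i, Be j, Be k)" "i < dA - 2" "j < dB - 2" "k < dC - 2" "(i, j, k) \<noteq> (0, 0, 0)"
  | (s) "D = (On, On, On)"
proof -
  note cs = that
  from assms consider
      "D \<in> (\<lambda>(i, k). (Xi i, K0, Et k)) ` P2 (dA - 1) (dC - 1)"
    | "D \<in> (\<lambda>(i, j). (Xi i, Et j, KT)) ` P2 (dA - 1) (dB - 1)"
    | "D \<in> (\<lambda>(j, k). (KT, Xi j, Et k)) ` P2 (dB - 1) (dC - 1)"
    | "D \<in> (\<lambda>(i, k). (Et i, KT, Xi k)) ` P2 (dA - 1) (dC - 1)"
    | "D \<in> (\<lambda>(i, j). (Et i, Xi j, K0)) ` P2 (dA - 1) (dB - 1)"
    | "D \<in> (\<lambda>(j, k). (K0, Et j, Xi k)) ` P2 (dB - 1) (dC - 1)"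
    | "D \<in> (\<lambda>(i, j, k). (Be i, Be j, Be k)) ` P3 (dA - 2) (dB - 2) (dC - 2)"
    | "D = (On, On, On)"
    unfolding Dset_def by blast
  then show thesis
  proof cases
    case 1 then show thesis
      apply (elim P2_elim)
      apply (rule cs(1))
      apply assumption+
      done
  next
    case 2 then show thesis
      apply (elim P2_elim)
      apply (rule cs(2))
      apply assumption+
      done
  next
    case 3 then show thesis
      apply (elim P2_elim)
      apply (rule cs(3))
      apply assumption+
      done
  next
    case 4 then show thesis
      apply (elim P2_elim)
      apply (rule cs(4))
      apply assumption+
      done
  next
    case 5 then show thesis
      apply (elim P2_elim)
      apply (rule cs(5))
      apply assumption+
      done
  next
    case 6 then show thesis
      apply (elim P2_elim)
      apply (rule cs(6))
      apply assumption+
      done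
  next
    case 7 then show thesis
      apply (elim P3_elim)
      apply (rule cs(7))
      apply assumption+
      done
  next
    case 8 then show thesis by (rule cs(8))
  qed
qed

lemma Dset_valid: "D \<in> Dset dA dB dC \<Longrightarrow> valid dA (fst D) \<and> valid dB (fst (snd D)) \<and> valid dC (snd (snd D))"
  by (erule Dset_cases) auto

lemma Dset_orth:
  assumes "D \<in> Dset dA dB dC" "D' \<in> Dset dA dB dC" "D \<noteq> D'"
  shows "orth1 (fst D) (fst D') \<or> orth1 (fst (snd D)) (fst (snd D')) \<or> orth1 (snd (snd D)) (snd (snd D'))"
  using assms(3)
  by (cases rule: Dset_cases[OF assms(1)]; cases rule: Dset_cases[OF assms(2)]; simp add: orth1_def)

lemma finite_Dset: "finite (Dset dA dB dC)"
  unfolding Dset_def P2_def P3_def by simp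

fun pt :: "nat \<Rightarrow> desc \<Rightarrow> nat" where
  "pt d K0 = 0" | "pt d KT = d - 1" | "pt d (Xi _) = 1" | "pt d (Et _) = 0" | "pt d (Be _) = 1" | "pt d On = 0"

lemma vec_pt: "3 \<le> d \<Longrightarrow> vec d a (pt d a) = 1"
  by (cases a) (auto simp: ket_def xi_val eta_val beta_val allones_val)

lemma vec_cvec: "3 \<le> d \<Longrightarrow> vec d a \<in> cvec d"
  by (cases a) (auto simp: cvec_def ket_def xi_val eta_val beta_val allones_val)


lemma l1[simp]: "((a::complex) + of_nat n * a = 0) = (a = 0)"
proof -
  have "a + of_nat n * a = of_nat (Suc n) * a" by (simp add: algebra_simps)
  then show ?thesis by (simp del: of_nat_Suc)
qed
lemma l2[simp]: "(of_nat n * (a::complex) + a = 0) = (a = 0)"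
proof -
  have "of_nat n * a + a = of_nat (Suc n) * a" by (simp add: algebra_simps)
  then show ?thesis by (simp del: of_nat_Suc)
qed
lemma l3[simp]: "(2 * (a::complex) + of_nat n * a = 0) = (a = 0)"
proof -
  have "2 * a + of_nat n * a = of_nat (Suc (Suc n)) * a" by (simp add: algebra_simps)
  then show ?thesis by (simp del: of_nat_Suc)
qed
lemma l4[simp]: "((a::complex) + of_nat n * a + a = 0) = (a = 0)"
proof -
  have "a + of_nat n * a + a = of_nat (Suc (Suc n)) * a" by (simp add: algebra_simps)
  then show ?thesis by (simp del: of_nat_Suc)
qed
lemma allC:
  fixes x0 x1 xt y0 y1 yt z0 z1 zt :: complex and na nb nc :: nat
  assumes A1: "y0=0 \<or> (x1=0\<and>xt=0) \<or> (z0=0 \<and> z1=0) \<or> (x1=xt \<and> z1=z0)"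
  and A2: "zt=0 \<or> (x1=0\<and>xt=0) \<or> (y0=0\<and>y1=0) \<or> (x1=xt \<and> y1=y0)"
  and A3: "xt=0 \<or> (y1=0\<and>yt=0) \<or> (z0=0\<and>z1=0) \<or> (y1=yt \<and> z1=z0)"
  and B1: "yt=0 \<or> (x0=0\<and>x1=0) \<or> (z1=0\<and>zt=0) \<or> (x1=x0 \<and> z1=zt)"
  and B2: "z0=0 \<or> (x0=0\<and>x1=0) \<or> (y1=0\<and>yt=0) \<or> (x1=x0 \<and> y1=yt)"
  and B3: "x0=0 \<or> (y0=0\<and>y1=0) \<or> (z1=0\<and>zt=0) \<or> (y1=y0 \<and> z1=zt)"
  and nx: "x0\<noteq>0 \<or> xt\<noteq>0 \<or> x1\<noteq>0"
  and ny: "y0\<noteq>0 \<or> yt\<noteq>0 \<or> y1\<noteq>0"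
  and nz: "z0\<noteq>0 \<or> zt\<noteq>0 \<or> z1\<noteq>0"
  and S: "x0 + of_nat na * x1 + xt = 0 \<or> y0 + of_nat nb * y1 + yt = 0 \<or> z0 + of_nat nc * z1 + zt = 0"
  and nn: "na \<ge> 1" "nb \<ge> 1" "nc \<ge> 1"
  shows False
proof -
  consider (I) "x0\<noteq>0" "xt\<noteq>0" | (II) "x0\<noteq>0" "xt=0" | (III) "x0=0" "xt\<noteq>0" | (IV) "x0=0" "xt=0" by blast
  then show False
  proof cases
    case I
    from A3 I have P: "(y1=0\<and>yt=0) \<or> (z0=0\<and>z1=0) \<or> (y1=yt\<and>z1=z0)" by simp
    from B3 I have Q: "(y0=0\<and>y1=0) \<or> (z1=0\<and>zt=0) \<or> (y1=y0\<and>z1=zt)" by simp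
    from A1 I have A1': "y0=0 \<or> (z0=0 \<and> z1=0) \<or> (x1=xt \<and> z1=z0)" by simp
    from B1 I have B1': "yt=0 \<or> (z1=0\<and>zt=0) \<or> (x1=x0 \<and> z1=zt)" by simp
    show False using P Q A1' B1' ny nz I S nn by auto
  next
    case II
    show False
    proof (cases "x1=0")
      case True
      from B1 II True have B1': "yt=0 \<or> (z1=0\<and>zt=0)" by auto
      from B2 II True have B2': "z0=0 \<or> (y1=0\<and>yt=0)" by auto
      from B3 II have B3': "(y0=0\<and>y1=0) \<or> (z1=0\<and>zt=0) \<or> (y1=y0\<and>z1=zt)" by simp
      show False using B1' B2' B3' ny nz II True S nn by auto
    next
      case False
      from A1 II False have A1': "y0=0 \<or> (z0=0 \<and> z1=0)" by auto
      from A2 II False have A2': "zt=0 \<or> (y0=0 \<and> y1=0)" by auto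
      from B1 II have B1': "yt=0 \<or> (z1=0\<and>zt=0) \<or> (x1=x0 \<and> z1=zt)" by simp
      from B2 II have B2': "z0=0 \<or> (y1=0\<and>yt=0) \<or> (x1=x0 \<and> y1=yt)" by simp
      from B3 II have B3': "(y0=0\<and>y1=0) \<or> (z1=0\<and>zt=0) \<or> (y1=y0\<and>z1=zt)" by simp
      show False using A1' A2' B1' B2' B3' ny nz II False S nn by auto
    qed
  next
    case III
    show False
    proof (cases "x1=0")
      case True
      from A1 III True have A1': "y0=0 \<or> (z0=0 \<and> z1=0)" by auto
      from A2 III True have A2': "zt=0 \<or> (y0=0 \<and> y1=0)" by auto
      from A3 III have A3': "(y1=0\<and>yt=0) \<or> (z0=0\<and>z1=0) \<or> (y1=yt\<and>z1=z0)" by simp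
      show False using A1' A2' A3' ny nz III True S nn by auto
    next
      case False
      from A1 III have A1': "y0=0 \<or> (z0=0 \<and> z1=0) \<or> (x1=xt \<and> z1=z0)" by simp
      from A2 III have A2': "zt=0 \<or> (y0=0\<and>y1=0) \<or> (x1=xt \<and> y1=y0)" by simp
      from A3 III have A3': "(y1=0\<and>yt=0) \<or> (z0=0\<and>z1=0) \<or> (y1=yt\<and>z1=z0)" by simp
      from B1 III False have B1': "yt=0 \<or> (z1=0\<and>zt=0)" by auto
      from B2 III False have B2': "z0=0 \<or> (y1=0\<and>yt=0)" by auto
      show False using A1' A2' A3' B1' B2' ny nz III False S nn by auto
    qed
  next
    case IV
    then have x1: "x1 \<noteq> 0" using nx by simp
    from A1 IV x1 have A1': "y0=0 \<or> (z0=0 \<and> z1=0)" by auto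
    from A2 IV x1 have A2': "zt=0 \<or> (y0=0 \<and> y1=0)" by auto
    from B1 IV x1 have B1': "yt=0 \<or> (z1=0\<and>zt=0)" by auto
    from B2 IV x1 have B2': "z0=0 \<or> (y1=0\<and>yt=0)" by auto
    have y0: "y0 = 0" using A1' A2' nz ny by auto
    have yt: "yt = 0" using B1' B2' nz ny by auto
    have z0: "z0 = 0" using B2' y0 yt ny by auto
    have zt: "zt = 0" using A2' y0 yt ny by auto
    show False using S IV y0 yt z0 zt x1 nn ny nz by simp
  qed
qed
lemma ncx:
  fixes y0 y1 yt z0 z1 zt :: complex
  assumes "y0=0 \<or> (z0=0 \<and> Cz \<and> z1=0)" "zt=0 \<or> (y0=0\<and>Cy\<and>y1=0)"
   "yt=0 \<or> (Cz\<and>z1=0\<and>zt=0)" "z0=0 \<or> (Cy\<and>y1=0\<and>yt=0)"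
   "(Cy\<and>y1=0) \<or> (Cz\<and>z1=0)"
   "y0\<noteq>0 \<or> yt\<noteq>0 \<or> \<not>Cy \<or> y1\<noteq>0"
   "z0\<noteq>0 \<or> zt\<noteq>0 \<or> \<not>Cz \<or> z1\<noteq>0"
  shows False using assms by auto
lemma ncy:
  fixes x0 x1 xt z0 z1 zt :: complex
  assumes "zt=0 \<or> (Cx\<and>x1=0\<and>xt=0)" "xt=0 \<or> (z0=0\<and>Cz\<and>z1=0)"
   "z0=0 \<or> (x0=0\<and>Cx\<and>x1=0)" "x0=0 \<or> (Cz\<and>z1=0\<and>zt=0)"
   "(Cx\<and>x1=0) \<or> (Cz\<and>z1=0)"
   "x0\<noteq>0 \<or> xt\<noteq>0 \<or> \<not>Cx \<or> x1\<noteq>0"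
   "z0\<noteq>0 \<or> zt\<noteq>0 \<or> \<not>Cz \<or> z1\<noteq>0"
  shows False using assms by auto
lemma ncz:
  fixes x0 x1 xt y0 y1 yt :: complex
  assumes "y0=0 \<or> (Cx\<and>x1=0\<and>xt=0)" "xt=0 \<or> (Cy\<and>y1=0\<and>yt=0)"
   "yt=0 \<or> (x0=0\<and>Cx\<and>x1=0)" "x0=0 \<or> (y0=0\<and>Cy\<and>y1=0)"
   "(Cx\<and>x1=0) \<or> (Cy\<and>y1=0)"
   "x0\<noteq>0 \<or> xt\<noteq>0 \<or> \<not>Cx \<or> x1\<noteq>0"
   "y0\<noteq>0 \<or> yt\<noteq>0 \<or> \<not>Cy \<or> y1\<noteq>0"
  shows False using assms by auto

lemma abs_case:
  fixes x0 x1 xt y0 y1 yt z0 z1 zt sx sy sz :: complex and na nb nc :: nat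
  assumes A1: "y0=0 \<or> (Cx\<and>x1=0\<and>xt=0) \<or> (z0=0 \<and> Cz \<and> z1=0) \<or> ((Cx \<and> x1=xt) \<and> (Cz\<and>z1=z0))"
  and A2: "zt=0 \<or> (Cx\<and>x1=0\<and>xt=0) \<or> (y0=0\<and>Cy\<and>y1=0) \<or> ((Cx\<and>x1=xt) \<and> (Cy\<and>y1=y0))"
  and A3: "xt=0 \<or> (Cy\<and>y1=0\<and>yt=0) \<or> (z0=0\<and>Cz\<and>z1=0) \<or> ((Cy\<and>y1=yt) \<and> (Cz\<and>z1=z0))"
  and B1: "yt=0 \<or> (x0=0\<and>Cx\<and>x1=0) \<or> (Cz\<and>z1=0\<and>zt=0) \<or> ((Cx\<and>x1=x0) \<and> (Cz\<and>z1=zt))"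
  and B2: "z0=0 \<or> (x0=0\<and>Cx\<and>x1=0) \<or> (Cy\<and>y1=0\<and>yt=0) \<or> ((Cx\<and>x1=x0) \<and> (Cy\<and>y1=yt))"
  and B3: "x0=0 \<or> (y0=0\<and>Cy\<and>y1=0) \<or> (Cz\<and>z1=0\<and>zt=0) \<or> ((Cy\<and>y1=y0) \<and> (Cz\<and>z1=zt))"
  and F: "(Cx\<and>x1=0) \<or> (Cy\<and>y1=0) \<or> (Cz\<and>z1=0) \<or> (Cx\<and>Cy\<and>Cz)"
  and S: "sx=0 \<or> sy=0 \<or> sz=0"
  and nx: "x0\<noteq>0 \<or> xt\<noteq>0 \<or> \<not>Cx \<or> x1\<noteq>0"
  and ny: "y0\<noteq>0 \<or> yt\<noteq>0 \<or> \<not>Cy \<or> y1\<noteq>0"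
  and nz: "z0\<noteq>0 \<or> zt\<noteq>0 \<or> \<not>Cz \<or> z1\<noteq>0"
  and sxd: "Cx \<Longrightarrow> sx = x0 + of_nat na * x1 + xt"
  and syd: "Cy \<Longrightarrow> sy = y0 + of_nat nb * y1 + yt"
  and szd: "Cz \<Longrightarrow> sz = z0 + of_nat nc * z1 + zt"
  and nn: "na \<ge> 1" "nb \<ge> 1" "nc \<ge> 1"
  shows False
proof (cases "Cx \<and> Cy \<and> Cz")
  case True
  show ?thesis
  proof (rule allC[of y0 x1 xt z0 z1 zt y1 yt x0 na nb nc])
    show "x0 + of_nat na * x1 + xt = 0 \<or> y0 + of_nat nb * y1 + yt = 0 \<or> z0 + of_nat nc * z1 + zt = 0"
      using S True sxd syd szd by simp
  qed (insert A1 A2 A3 B1 B2 B3 nx ny nz nn True, simp_all)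
next
  case False
  then consider "\<not>Cx" | "\<not>Cy" | "\<not>Cz" by blast
  then show ?thesis
  proof cases
    case 1
    show ?thesis by (rule ncx[of y0 z0 Cz z1 zt Cy y1 yt]) (insert A1 A2 B1 B2 F ny nz 1, simp_all)
  next
    case 2
    show ?thesis by (rule ncy[of zt Cx x1 xt z0 Cz z1 x0]) (insert A2 A3 B2 B3 F nx nz 2, simp_all)
  next
    case 3
    show ?thesis by (rule ncz[of y0 Cx x1 xt Cy y1 yt x0]) (insert A1 A3 B1 B3 F nx ny 3, simp_all)
  qed
qed

definition Cv :: "nat \<Rightarrow> (nat \<Rightarrow> complex) \<Rightarrow> bool" where
  "Cv a x \<longleftrightarrow> (\<forall>t. 1 \<le> t \<and> t \<le> a - 2 \<longrightarrow> x t = x 1)"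

definition Zu :: "nat \<Rightarrow> (nat \<Rightarrow> complex) \<Rightarrow> bool" where
  "Zu a x \<longleftrightarrow> Cv a x \<and> x 1 = 0 \<and> x (a - 1) = 0"
definition Uc :: "nat \<Rightarrow> (nat \<Rightarrow> complex) \<Rightarrow> bool" where
  "Uc a x \<longleftrightarrow> Cv a x \<and> x 1 = x (a - 1)"
definition Zl :: "nat \<Rightarrow> (nat \<Rightarrow> complex) \<Rightarrow> bool" where
  "Zl a x \<longleftrightarrow> x 0 = 0 \<and> Cv a x \<and> x 1 = 0"
definition Lc :: "nat \<Rightarrow> (nat \<Rightarrow> complex) \<Rightarrow> bool" where
  "Lc a x \<longleftrightarrow> Cv a x \<and> x 1 = x 0"

lemma upv: "\<forall>t<n. x (Suc t) = c \<Longrightarrow> 1 \<le> s \<Longrightarrow> s \<le> n \<Longrightarrow> x s = c"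
  by (cases s) auto

lemma conv_up0:
  assumes a: "3 \<le> a" and h: "\<forall>t<a - 1. x (Suc t) = 0" shows "Zu a x"
proof -
  have u: "x s = 0" if "1 \<le> s" "s \<le> a - 1" for s using upv[OF h that] .
  have "x 1 = 0" using u a by simp
  moreover have "x (a - 1) = 0" using u a by simp
  moreover have "Cv a x" unfolding Cv_def using u \<open>x 1 = 0\<close> a by auto
  ultimately show ?thesis by (simp add: Zu_def)
qed

lemma conv_upc:
  assumes a: "3 \<le> a" and h: "\<forall>t<a - 1. x (Suc t) = x (Suc 0)" shows "Uc a x"
proof -
  have u: "x s = x 1" if "1 \<le> s" "s \<le> a - 1" for s using upv[OF h that] by simp
  have "x (a - 1) = x 1" using u[of "a - 1"] a by simp
  moreover have "Cv a x" unfolding Cv_def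
  proof (intro allI impI)
    fix t assume t: "1 \<le> t \<and> t \<le> a - 2"
    show "x t = x 1" by (rule u) (use t a in arith)+
  qed
  ultimately show ?thesis by (simp add: Uc_def)
qed

lemma conv_lo0:
  assumes a: "3 \<le> a" and h: "\<forall>t<a - 1. x t = 0" shows "Zl a x"
proof -
  have "x 0 = 0" "x 1 = 0" using h a by auto
  moreover have "Cv a x" unfolding Cv_def using h a \<open>x 1 = 0\<close> by auto
  ultimately show ?thesis by (simp add: Zl_def)
qed

lemma conv_loc:
  assumes a: "3 \<le> a" and h: "\<forall>t<a - 1. x t = x 0" shows "Lc a x"
proof -
  have "x 1 = x 0" using h[rule_format, of 1] a by simp
  moreover have "Cv a x" unfolding Cv_def
  proof (intro allI impI)
    fix t assume t: "1 \<le> t \<and> t \<le> a - 2"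
    have "x t = x 0" by (rule h[rule_format]) (use t a in arith)
    then show "x t = x 1" using \<open>x 1 = x 0\<close> by simp
  qed
  ultimately show ?thesis by (simp add: Lc_def)
qed

lemma conv_mid0:
  assumes a: "3 \<le> a" and h: "\<forall>t<a - 2. x (Suc t) = 0" shows "Cv a x \<and> x 1 = 0"
proof -
  have u: "x s = 0" if "1 \<le> s" "s \<le> a - 2" for s using upv[OF h that] .
  have "x 1 = 0" using u a by simp
  moreover have "Cv a x" unfolding Cv_def using u \<open>x 1 = 0\<close> a by auto
  ultimately show ?thesis by simp
qed

lemma conv_midc:
  assumes a: "3 \<le> a" and h: "\<forall>t<a - 2. x (Suc t) = x (Suc 0)" shows "Cv a x"
proof -
  have u: "x s = x 1" if "1 \<le> s" "s \<le> a - 2" for s using upv[OF h that] by simp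
  show ?thesis unfolding Cv_def
  proof (intro allI impI)
    fix t assume t: "1 \<le> t \<and> t \<le> a - 2"
    show "x t = x 1" by (rule u) (use t a in arith)+
  qed
qed

lemma conv_sum:
  assumes a: "3 \<le> a" and c: "Cv a x"
  shows "(\<Sum>t<a. x t) = x 0 + of_nat (a - 2) * x 1 + x (a - 1)"
proof -
  have aa: "a = Suc (Suc (a - 2))" using a by simp
  have "(\<Sum>t<a. x t) = (\<Sum>t<Suc (Suc (a - 2)). x t)" using aa by simp
  also have "\<dots> = x 0 + (\<Sum>t<Suc (a - 2). x (Suc t))" by (rule sum.lessThan_Suc_shift)
  also have "\<dots> = x 0 + ((\<Sum>t<a - 2. x (Suc t)) + x (Suc (a - 2)))" by simp
  also have "(\<Sum>t<a - 2. x (Suc t)) = (\<Sum>t<a - 2. x 1)"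
  proof (rule sum.cong[OF refl])
    fix t assume "t \<in> {..<a - 2}"
    then have "1 \<le> Suc t \<and> Suc t \<le> a - 2" by simp
    then show "x (Suc t) = x 1" using c unfolding Cv_def by blast
  qed
  also have "Suc (a - 2) = a - 1" using a by simp
  finally show ?thesis by simp
qed

lemma conv_nz:
  assumes a: "3 \<le> a" and h: "\<exists>t<a. x t \<noteq> 0"
  shows "x 0 \<noteq> 0 \<or> x (a - 1) \<noteq> 0 \<or> \<not> Cv a x \<or> x 1 \<noteq> 0"
proof (rule ccontr)
  assume "\<not> ?thesis"
  then have z: "x 0 = 0" "x (a - 1) = 0" "Cv a x" "x 1 = 0" by auto
  obtain t where t: "t < a" "x t \<noteq> 0" using h by blast
  have "t = 0 \<or> t = a - 1 \<or> (1 \<le> t \<and> t \<le> a - 2)" using t a by auto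
  then show False using z t unfolding Cv_def by auto
qed

lemma UL:
  assumes a: "3 \<le> a" and c: "3 \<le> c"
    and h: "\<forall>i<a - 1. \<forall>k<c - 1. (i, k) \<noteq> (0, 0) \<longrightarrow> G (a - 1) (\<lambda>t. x (Suc t)) i * G (c - 1) z k = 0"
  shows "Zu a x \<or> Zl c z \<or> (Uc a x \<and> Lc c z)"
proof -
  have "a - 1 \<ge> 1" "c - 1 \<ge> 1" using a c by auto
  from L2[OF this h] show ?thesis using conv_up0[OF a] conv_upc[OF a] conv_lo0[OF c] conv_loc[OF c] by blast
qed

lemma LU:
  assumes a: "3 \<le> a" and c: "3 \<le> c"
    and h: "\<forall>i<a - 1. \<forall>k<c - 1. (i, k) \<noteq> (0, 0) \<longrightarrow> G (a - 1) x i * G (c - 1) (\<lambda>t. z (Suc t)) k = 0"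
  shows "Zl a x \<or> Zu c z \<or> (Lc a x \<and> Uc c z)"
proof -
  have "a - 1 \<ge> 1" "c - 1 \<ge> 1" using a c by auto
  from L2[OF this h] show ?thesis using conv_lo0[OF a] conv_loc[OF a] conv_up0[OF c] conv_upc[OF c] by blast
qed

lemma mk_tinner:
  "tinner dA dB dC (mk dA dB dC D) (prod3 x y z) =
     ip dA (vec dA (fst D)) x * ip dB (vec dB (fst (snd D))) y * ip dC (vec dC (snd (snd D))) z"
  unfolding mk_def by (rule tinner_prod3)

lemma mk_orth:
  assumes d: "3 \<le> dA" "3 \<le> dB" "3 \<le> dC"
    and D: "D \<in> Dset dA dB dC" "D' \<in> Dset dA dB dC" "D \<noteq> D'"
  shows "tinner dA dB dC (mk dA dB dC D) (mk dA dB dC D') = 0"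
proof -
  have v: "valid dA (fst D)" "valid dB (fst (snd D))" "valid dC (snd (snd D))"
    "valid dA (fst D')" "valid dB (fst (snd D'))" "valid dC (snd (snd D'))"
    using Dset_valid[OF D(1)] Dset_valid[OF D(2)] by auto
  have e: "tinner dA dB dC (mk dA dB dC D) (mk dA dB dC D') =
     ip dA (vec dA (fst D)) (vec dA (fst D')) * ip dB (vec dB (fst (snd D))) (vec dB (fst (snd D')))
       * ip dC (vec dC (snd (snd D))) (vec dC (snd (snd D')))"
    using mk_tinner[of dA dB dC D] by (simp add: mk_def)
  from Dset_orth[OF D] show ?thesis
    unfolding e using ip_orth1[OF d(1) v(1) v(4)] ip_orth1[OF d(2) v(2) v(5)] ip_orth1[OF d(3) v(3) v(6)]
    by auto
qed

lemma pt_less: "3 \<le> d \<Longrightarrow> pt d a < d"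
  by (cases a) auto

lemma mk_product:
  assumes d: "3 \<le> dA" "3 \<le> dB" "3 \<le> dC"
  shows "product_state dA dB dC (mk dA dB dC D)"
proof -
  let ?p = "fst D" and ?q = "fst (snd D)" and ?r = "snd (snd D)"
  have "mk dA dB dC D (pt dA ?p) (pt dB ?q) (pt dC ?r) = 1"
    unfolding mk_def prod3_def using vec_pt[OF d(1)] vec_pt[OF d(2)] vec_pt[OF d(3)] by simp
  then have "mk dA dB dC D \<noteq> (\<lambda>a b c. 0)" by (metis zero_neq_one)
  moreover have "vec dA ?p \<in> cvec dA" "vec dB ?q \<in> cvec dB" "vec dC ?r \<in> cvec dC"
    using vec_cvec d by auto
  ultimately show ?thesis unfolding product_state_def mk_def by blast
qed

lemma ip_self_nz:
  assumes "t0 < d" "w t0 \<noteq> 0" shows "ip d w w \<noteq> 0"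
proof -
  have e: "ip d w w = complex_of_real (\<Sum>t<d. (cmod (w t))\<^sup>2)"
    unfolding ip_def of_real_sum
    by (rule sum.cong[OF refl]) (metis complex_norm_square mult.commute of_real_power)
  have "0 < (\<Sum>t<d. (cmod (w t))\<^sup>2)"
    by (rule sum_pos2[of "{..<d}" t0]) (use assms in auto)
  then show ?thesis unfolding e by (simp only: of_real_eq_0_iff)
qed

lemma mk_self_nz:
  assumes d: "3 \<le> dA" "3 \<le> dB" "3 \<le> dC"
  shows "tinner dA dB dC (mk dA dB dC D) (mk dA dB dC D) \<noteq> 0"
proof -
  have "ip d (vec d a) (vec d a) \<noteq> 0" if "3 \<le> d" for d a
    using ip_self_nz[OF pt_less[OF that], of "vec d a" a] vec_pt[OF that, of a] by simp
  then show ?thesis using mk_tinner[of dA dB dC D] d by (simp add: mk_def)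
qed

lemma P2_mem: "i < n \<Longrightarrow> k < m \<Longrightarrow> (i, k) \<noteq> (0, 0) \<Longrightarrow> g i k \<in> (\<lambda>(i, k). g i k) ` P2 n m"
  by (rule image_eqI[where x="(i, k)"]) (auto simp: P2_def)
lemma P3_mem: "i < n \<Longrightarrow> j < m \<Longrightarrow> k < l \<Longrightarrow> (i, j, k) \<noteq> (0, 0, 0) \<Longrightarrow> g i j k \<in> (\<lambda>(i, j, k). g i j k) ` P3 n m l"
  by (rule image_eqI[where x="(i, j, k)"]) (auto simp: P3_def)

lemma mem_a1: "i < dA - 1 \<Longrightarrow> k < dC - 1 \<Longrightarrow> (i, k) \<noteq> (0, 0) \<Longrightarrow> (Xi i, K0, Et k) \<in> Dset dA dB dC"
  unfolding Dset_def using P2_mem[of i "dA - 1" k "dC - 1" "\<lambda>i k. (Xi i, K0, Et k)"] by blast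
lemma mem_a2: "i < dA - 1 \<Longrightarrow> j < dB - 1 \<Longrightarrow> (i, j) \<noteq> (0, 0) \<Longrightarrow> (Xi i, Et j, KT) \<in> Dset dA dB dC"
  unfolding Dset_def using P2_mem[of i "dA - 1" j "dB - 1" "\<lambda>i j. (Xi i, Et j, KT)"] by blast
lemma mem_a3: "j < dB - 1 \<Longrightarrow> k < dC - 1 \<Longrightarrow> (j, k) \<noteq> (0, 0) \<Longrightarrow> (KT, Xi j, Et k) \<in> Dset dA dB dC"
  unfolding Dset_def using P2_mem[of j "dB - 1" k "dC - 1" "\<lambda>j k. (KT, Xi j, Et k)"] by blast
lemma mem_b1: "i < dA - 1 \<Longrightarrow> k < dC - 1 \<Longrightarrow> (i, k) \<noteq> (0, 0) \<Longrightarrow> (Et i, KT, Xi k) \<in> Dset dA dB dC"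
  unfolding Dset_def using P2_mem[of i "dA - 1" k "dC - 1" "\<lambda>i k. (Et i, KT, Xi k)"] by blast
lemma mem_b2: "i < dA - 1 \<Longrightarrow> j < dB - 1 \<Longrightarrow> (i, j) \<noteq> (0, 0) \<Longrightarrow> (Et i, Xi j, K0) \<in> Dset dA dB dC"
  unfolding Dset_def using P2_mem[of i "dA - 1" j "dB - 1" "\<lambda>i j. (Et i, Xi j, K0)"] by blast
lemma mem_b3: "j < dB - 1 \<Longrightarrow> k < dC - 1 \<Longrightarrow> (j, k) \<noteq> (0, 0) \<Longrightarrow> (K0, Et j, Xi k) \<in> Dset dA dB dC"
  unfolding Dset_def using P2_mem[of j "dB - 1" k "dC - 1" "\<lambda>j k. (K0, Et j, Xi k)"] by blast
lemma mem_f: "i < dA - 2 \<Longrightarrow> j < dB - 2 \<Longrightarrow> k < dC - 2 \<Longrightarrow> (i, j, k) \<noteq> (0, 0, 0) \<Longrightarrow> (Be i, Be j, Be k) \<in> Dset dA dB dC"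
  unfolding Dset_def using P3_mem[of i "dA - 2" j "dB - 2" k "dC - 2" "\<lambda>i j k. (Be i, Be j, Be k)"] by blast
lemma mem_s: "(On, On, On) \<in> Dset dA dB dC"
  unfolding Dset_def by blast

lemma corner:
  assumes d: "3 \<le> dA" "3 \<le> dB" "3 \<le> dC" and D: "D \<in> Dset dA dB dC" "D \<noteq> (On, On, On)"
  shows "mk dA dB dC D 0 0 0 = 0 \<and> mk dA dB dC D (dA - 1) (dB - 1) (dC - 1) = 0"
proof -
  have z: "xi d i 0 = 0" "beta d i 0 = 0" "ket (d - Suc 0) 0 = 0" "eta d i (d - Suc 0) = 0"
    "beta d i (d - Suc 0) = 0" "ket 0 (d - Suc 0) = 0" if "3 \<le> d" for d i
    using that by (auto simp: xi_val beta_val eta_val ket_def)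
  show ?thesis
    using D(2) by (cases rule: Dset_cases[OF D(1)]) (simp_all add: mk_def prod3_def z d)
qed

lemma notspan:
  assumes d: "3 \<le> dA" "3 \<le> dB" "3 \<le> dC"
  shows "\<not> (tspace dA dB dC \<subseteq> tspan (UPB_set dA dB dC))"
proof
  assume sub: "tspace dA dB dC \<subseteq> tspan (UPB_set dA dB dC)"
  define U where "U = UPB_set dA dB dC"
  define v where "v = (\<lambda>a b c. if a = 0 \<and> b = 0 \<and> c = 0 then (1::complex)
      else if a = dA - 1 \<and> b = dB - 1 \<and> c = dC - 1 then -1 else 0)"
  have "v \<in> tspace dA dB dC" unfolding tspace_def v_def using d by auto
  then obtain f where f: "v = (\<lambda>a b c. \<Sum>u\<in>U. f u * u a b c)"
    using sub unfolding tspan_def U_def by blast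
  define S where "S = mk dA dB dC (On, On, On)"
  have SU: "S \<in> U" unfolding S_def U_def UPB_eq using mem_s by blast
  have fin: "finite U" unfolding U_def UPB_eq using finite_Dset by blast
  have z: "u 0 0 0 = 0 \<and> u (dA - 1) (dB - 1) (dC - 1) = 0" if u: "u \<in> U - {S}" for u
  proof -
    obtain D where D: "D \<in> Dset dA dB dC" "u = mk dA dB dC D" using u unfolding U_def UPB_eq by blast
    have "D \<noteq> (On, On, On)" using u D S_def by auto
    then show ?thesis using corner[OF d D(1)] D(2) by simp
  qed
  have ev: "(\<Sum>u\<in>U. f u * u a b c) = f S * S a b c"
    if "(a = 0 \<and> b = 0 \<and> c = 0) \<or> (a = dA - 1 \<and> b = dB - 1 \<and> c = dC - 1)" for a b c
  proof -
    have "(\<Sum>u\<in>U. f u * u a b c) = f S * S a b c + (\<Sum>u\<in>U - {S}. f u * u a b c)"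
      by (rule sum.remove[OF fin SU])
    also have "(\<Sum>u\<in>U - {S}. f u * u a b c) = 0"
      by (rule sum.neutral) (use z that in auto)
    finally show ?thesis by simp
  qed
  have S1: "S a b c = 1" if "a < dA" "b < dB" "c < dC" for a b c
    unfolding S_def mk_def prod3_def using that by (simp add: allones_val)
  have fv: "v a b c = (\<Sum>u\<in>U. f u * u a b c)" for a b c using f by simp
  have pos: "0 < dA" "0 < dB" "0 < dC" "dA - 1 < dA" "dB - 1 < dB" "dC - 1 < dC" using d by auto
  have "v 0 0 0 = f S * S 0 0 0" unfolding fv by (rule ev) simp
  then have "v 0 0 0 = f S" using S1[OF pos(1-3)] by simp
  moreover have "v (dA - 1) (dB - 1) (dC - 1) = f S * S (dA - 1) (dB - 1) (dC - 1)"
    unfolding fv by (rule ev) simp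
  then have "v (dA - 1) (dB - 1) (dC - 1) = f S" using S1[OF pos(4-6)] by simp
  ultimately show False using d unfolding v_def by simp
qed

lemma prod0: "(a::complex) * b * c = 0 \<Longrightarrow> b \<noteq> 0 \<Longrightarrow> a * c = 0"
  by simp

lemma unext:
  assumes d: "3 \<le> dA" "3 \<le> dB" "3 \<le> dC"
    and ps: "product_state dA dB dC v"
    and orth: "\<forall>u\<in>UPB_set dA dB dC. tinner dA dB dC u v = 0"
  shows False
proof -
  obtain x y z where xyz: "x \<in> cvec dA" "y \<in> cvec dB" "z \<in> cvec dC" "v = prod3 x y z"
    and nz: "v \<noteq> (\<lambda>a b c. 0)"
    using ps unfolding product_state_def by blast
  have T: "ip dA (vec dA (fst D)) x * ip dB (vec dB (fst (snd D))) y * ip dC (vec dC (snd (snd D))) z = 0"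
    if "D \<in> Dset dA dB dC" for D
    using orth that mk_tinner[of dA dB dC D x y z] xyz(4) unfolding UPB_eq by auto
  have pos: "0 < dA" "0 < dB" "0 < dC" "dA - 1 < dA" "dB - 1 < dB" "dC - 1 < dC" using d by auto
  have "\<exists>a b c. x a * y b * z c \<noteq> 0"
  proof (rule ccontr)
    assume "\<not> ?thesis"
    then have "prod3 x y z = (\<lambda>a b c. 0)" unfolding prod3_def by auto
    then show False using nz xyz(4) by simp
  qed
  then obtain a b c where abc: "x a * y b * z c \<noteq> 0" by blast
  have "a < dA" using abc xyz(1) unfolding cvec_def by (cases "a < dA") auto
  moreover have "b < dB" using abc xyz(2) unfolding cvec_def by (cases "b < dB") auto
  moreover have "c < dC" using abc xyz(3) unfolding cvec_def by (cases "c < dC") auto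
  ultimately have nzx: "\<exists>t<dA. x t \<noteq> 0" and nzy: "\<exists>t<dB. y t \<noteq> 0" and nzz: "\<exists>t<dC. z t \<noteq> 0"
    using abc by auto
  have A1: "y 0 = 0 \<or> Zu dA x \<or> Zl dC z \<or> (Uc dA x \<and> Lc dC z)"
  proof (cases "y 0 = 0")
    case False
    have "\<forall>i<dA - 1. \<forall>k<dC - 1. (i, k) \<noteq> (0, 0) \<longrightarrow> G (dA - 1) (\<lambda>t. x (Suc t)) i * G (dC - 1) z k = 0"
    proof (intro allI impI)
      fix i k assume "i < dA - 1" "k < dC - 1" "(i, k) \<noteq> (0, 0)"
      from T[OF mem_a1[OF this]] show "G (dA - 1) (\<lambda>t. x (Suc t)) i * G (dC - 1) z k = 0"
        using d pos False by (simp add: ip_xi ip_eta ip_ket)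
    qed
    then show ?thesis using UL[OF d(1) d(3)] by blast
  qed simp
  have A2: "z (dC - 1) = 0 \<or> Zu dA x \<or> Zl dB y \<or> (Uc dA x \<and> Lc dB y)"
  proof (cases "z (dC - 1) = 0")
    case False
    have "\<forall>i<dA - 1. \<forall>k<dB - 1. (i, k) \<noteq> (0, 0) \<longrightarrow> G (dA - 1) (\<lambda>t. x (Suc t)) i * G (dB - 1) y k = 0"
    proof (intro allI impI)
      fix i k assume "i < dA - 1" "k < dB - 1" "(i, k) \<noteq> (0, 0)"
      from T[OF mem_a2[OF this]] show "G (dA - 1) (\<lambda>t. x (Suc t)) i * G (dB - 1) y k = 0"
        using d pos False by (simp add: ip_xi ip_eta ip_ket)
    qed
    then show ?thesis using UL[OF d(1) d(2)] by blast
  qed simp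
  have A3: "x (dA - 1) = 0 \<or> Zu dB y \<or> Zl dC z \<or> (Uc dB y \<and> Lc dC z)"
  proof (cases "x (dA - 1) = 0")
    case False
    have "\<forall>i<dB - 1. \<forall>k<dC - 1. (i, k) \<noteq> (0, 0) \<longrightarrow> G (dB - 1) (\<lambda>t. y (Suc t)) i * G (dC - 1) z k = 0"
    proof (intro allI impI)
      fix i k assume "i < dB - 1" "k < dC - 1" "(i, k) \<noteq> (0, 0)"
      from T[OF mem_a3[OF this]] show "G (dB - 1) (\<lambda>t. y (Suc t)) i * G (dC - 1) z k = 0"
        using d pos False by (simp add: ip_xi ip_eta ip_ket)
    qed
    then show ?thesis using UL[OF d(2) d(3)] by blast
  qed simp
  have B1: "y (dB - 1) = 0 \<or> Zl dA x \<or> Zu dC z \<or> (Lc dA x \<and> Uc dC z)"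
  proof (cases "y (dB - 1) = 0")
    case False
    have "\<forall>i<dA - 1. \<forall>k<dC - 1. (i, k) \<noteq> (0, 0) \<longrightarrow> G (dA - 1) x i * G (dC - 1) (\<lambda>t. z (Suc t)) k = 0"
    proof (intro allI impI)
      fix i k assume "i < dA - 1" "k < dC - 1" "(i, k) \<noteq> (0, 0)"
      from T[OF mem_b1[OF this]] show "G (dA - 1) x i * G (dC - 1) (\<lambda>t. z (Suc t)) k = 0"
        using d pos False by (simp add: ip_xi ip_eta ip_ket)
    qed
    then show ?thesis using LU[OF d(1) d(3)] by blast
  qed simp
  have B2: "z 0 = 0 \<or> Zl dA x \<or> Zu dB y \<or> (Lc dA x \<and> Uc dB y)"
  proof (cases "z 0 = 0")
    case False
    have "\<forall>i<dA - 1. \<forall>k<dB - 1. (i, k) \<noteq> (0, 0) \<longrightarrow> G (dA - 1) x i * G (dB - 1) (\<lambda>t. y (Suc t)) k = 0"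
    proof (intro allI impI)
      fix i k assume "i < dA - 1" "k < dB - 1" "(i, k) \<noteq> (0, 0)"
      from T[OF mem_b2[OF this]] show "G (dA - 1) x i * G (dB - 1) (\<lambda>t. y (Suc t)) k = 0"
        using d pos False by (simp add: ip_xi ip_eta ip_ket)
    qed
    then show ?thesis using LU[OF d(1) d(2)] by blast
  qed simp
  have B3: "x 0 = 0 \<or> Zl dB y \<or> Zu dC z \<or> (Lc dB y \<and> Uc dC z)"
  proof (cases "x 0 = 0")
    case False
    have "\<forall>i<dB - 1. \<forall>k<dC - 1. (i, k) \<noteq> (0, 0) \<longrightarrow> G (dB - 1) y i * G (dC - 1) (\<lambda>t. z (Suc t)) k = 0"
    proof (intro allI impI)
      fix i k assume "i < dB - 1" "k < dC - 1" "(i, k) \<noteq> (0, 0)"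
      from T[OF mem_b3[OF this]] show "G (dB - 1) y i * G (dC - 1) (\<lambda>t. z (Suc t)) k = 0"
        using d pos False by (simp add: ip_xi ip_eta ip_ket)
    qed
    then show ?thesis using LU[OF d(2) d(3)] by blast
  qed simp
  have F: "(Cv dA x \<and> x 1 = 0) \<or> (Cv dB y \<and> y 1 = 0) \<or> (Cv dC z \<and> z 1 = 0) \<or> (Cv dA x \<and> Cv dB y \<and> Cv dC z)"
  proof -
    have h: "\<forall>i<dA - 2. \<forall>j<dB - 2. \<forall>k<dC - 2. (i, j, k) \<noteq> (0, 0, 0) \<longrightarrow>
        G (dA - 2) (\<lambda>t. x (Suc t)) i * G (dB - 2) (\<lambda>t. y (Suc t)) j * G (dC - 2) (\<lambda>t. z (Suc t)) k = 0"
    proof (intro allI impI)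
      fix i j k assume "i < dA - 2" "j < dB - 2" "k < dC - 2" "(i, j, k) \<noteq> (0, 0, 0)"
      from T[OF mem_f[OF this]] show "G (dA - 2) (\<lambda>t. x (Suc t)) i * G (dB - 2) (\<lambda>t. y (Suc t)) j * G (dC - 2) (\<lambda>t. z (Suc t)) k = 0"
        using d by (simp add: ip_beta)
    qed
    have "dA - 2 \<ge> 1" "dB - 2 \<ge> 1" "dC - 2 \<ge> 1" using d by auto
    from L3[OF this h] show ?thesis
      using conv_mid0[OF d(1), of x] conv_mid0[OF d(2), of y] conv_mid0[OF d(3), of z]
        conv_midc[OF d(1), of x] conv_midc[OF d(2), of y] conv_midc[OF d(3), of z] by blast
  qed
  have S: "(\<Sum>t<dA. x t) = 0 \<or> (\<Sum>t<dB. y t) = 0 \<or> (\<Sum>t<dC. z t) = 0"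
    using T[OF mem_s] by (simp add: ip_ones)
  note defs = Zu_def Uc_def Zl_def Lc_def
  show False
    by (rule abs_case[OF A1[unfolded defs] A2[unfolded defs] A3[unfolded defs] B1[unfolded defs]
          B2[unfolded defs] B3[unfolded defs] F S conv_nz[OF d(1) nzx] conv_nz[OF d(2) nzy] conv_nz[OF d(3) nzz]
          conv_sum[OF d(1)] conv_sum[OF d(2)] conv_sum[OF d(3)]])
       (use d in auto)
qed

lemma card_P2: "1 \<le> n \<Longrightarrow> 1 \<le> m \<Longrightarrow> card (P2 n m) = n * m - 1"
  unfolding P2_def by (simp add: card_cartesian_product)
lemma card_P3: "1 \<le> n \<Longrightarrow> 1 \<le> m \<Longrightarrow> 1 \<le> l \<Longrightarrow> card (P3 n m l) = n * m * l - 1"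
  unfolding P3_def by (simp add: card_cartesian_product)

lemma card_img2: "(\<And>i k i' k'. g i k = g i' k' \<Longrightarrow> i = i' \<and> k = k') \<Longrightarrow> card ((\<lambda>(i, k). g i k) ` A) = card A"
  by (rule card_image) (auto simp: inj_on_def)
lemma card_img3: "(\<And>i j k i' j' k'. g i j k = g i' j' k' \<Longrightarrow> i = i' \<and> j = j' \<and> k = k') \<Longrightarrow> card ((\<lambda>(i, j, k). g i j k) ` A) = card A"
  by (rule card_image) (auto simp: inj_on_def)

lemma card_Dset:
  assumes d: "3 \<le> dA" "3 \<le> dB" "3 \<le> dC"
  shows "card (Dset dA dB dC) =
    2 * ((dA - 1) * (dC - 1) - 1) + 2 * ((dA - 1) * (dB - 1) - 1) + 2 * ((dB - 1) * (dC - 1) - 1)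
    + ((dA - 2) * (dB - 2) * (dC - 2) - 1) + 1"
proof -
  let ?S1 = "(\<lambda>(i, k). (Xi i, K0, Et k)) ` P2 (dA - 1) (dC - 1)"
  let ?S2 = "(\<lambda>(i, j). (Xi i, Et j, KT)) ` P2 (dA - 1) (dB - 1)"
  let ?S3 = "(\<lambda>(j, k). (KT, Xi j, Et k)) ` P2 (dB - 1) (dC - 1)"
  let ?S4 = "(\<lambda>(i, k). (Et i, KT, Xi k)) ` P2 (dA - 1) (dC - 1)"
  let ?S5 = "(\<lambda>(i, j). (Et i, Xi j, K0)) ` P2 (dA - 1) (dB - 1)"
  let ?S6 = "(\<lambda>(j, k). (K0, Et j, Xi k)) ` P2 (dB - 1) (dC - 1)"
  let ?S7 = "(\<lambda>(i, j, k). (Be i, Be j, Be k)) ` P3 (dA - 2) (dB - 2) (dC - 2)"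
  let ?S8 = "{(On, On, On)}"
  have fin: "finite ?S1" "finite ?S2" "finite ?S3" "finite ?S4" "finite ?S5" "finite ?S6" "finite ?S7" "finite ?S8"
    by (simp_all add: P2_def P3_def)
  have "card (Dset dA dB dC) = card ?S1 + card ?S2 + card ?S3 + card ?S4 + card ?S5 + card ?S6 + card ?S7 + card ?S8"
    unfolding Dset_def
    apply (subst card_Un_disjoint, use fin in simp, use fin in simp, fastforce)+
    apply simp
    done
  also have "\<dots> = ((dA - 1) * (dC - 1) - 1) + ((dA - 1) * (dB - 1) - 1) + ((dB - 1) * (dC - 1) - 1)
      + ((dA - 1) * (dC - 1) - 1) + ((dA - 1) * (dB - 1) - 1) + ((dB - 1) * (dC - 1) - 1)
      + ((dA - 2) * (dB - 2) * (dC - 2) - 1) + 1"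
  proof -
    have "card ?S1 = (dA - 1) * (dC - 1) - 1" "card ?S4 = (dA - 1) * (dC - 1) - 1"
      "card ?S2 = (dA - 1) * (dB - 1) - 1" "card ?S5 = (dA - 1) * (dB - 1) - 1"
      "card ?S3 = (dB - 1) * (dC - 1) - 1" "card ?S6 = (dB - 1) * (dC - 1) - 1"
      by (subst card_img2, simp, use d in \<open>simp add: card_P2\<close>)+
    moreover have "card ?S7 = (dA - 2) * (dB - 2) * (dC - 2) - 1"
      by (subst card_img3, simp, use d in \<open>simp add: card_P3\<close>)
    ultimately show ?thesis by simp
  qed
  finally show ?thesis by simp
qed

lemma arith_card:
  fixes p q r :: nat
  shows "2 * ((p + 2) * (r + 2) - 1) + 2 * ((p + 2) * (q + 2) - 1) + 2 * ((q + 2) * (r + 2) - 1)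
    + ((p + 1) * (q + 1) * (r + 1) - 1) + 1 = (p + 3) * (q + 3) * (r + 3) - 8"
proof -
  have e1: "(p + 2) * (r + 2) - 1 = p * r + 2 * p + 2 * r + 3" by (simp add: algebra_simps)
  have e2: "(p + 2) * (q + 2) - 1 = p * q + 2 * p + 2 * q + 3" by (simp add: algebra_simps)
  have e3: "(q + 2) * (r + 2) - 1 = q * r + 2 * q + 2 * r + 3" by (simp add: algebra_simps)
  have e4: "(p + 1) * (q + 1) * (r + 1) - 1 = p * q * r + p * q + p * r + q * r + p + q + r" by (simp add: algebra_simps)
  have e5: "(p + 3) * (q + 3) * (r + 3) - 8 = p * q * r + 3 * (p * q + p * r + q * r) + 9 * (p + q + r) + 19"
    by (simp add: algebra_simps)
  show ?thesis unfolding e1 e2 e3 e4 e5 by (simp add: algebra_simps)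
qed

theorem proposition1:
  fixes dA dB dC :: nat
  assumes "3 \<le> dA" and "dA \<le> dB" and "dB \<le> dC"
  shows "is_UPB dA dB dC (UPB_set dA dB dC) \<and> card (UPB_set dA dB dC) = dA * dB * dC - 8"
proof -
  have d: "3 \<le> dA" "3 \<le> dB" "3 \<le> dC" using assms by auto
  have fin: "finite (UPB_set dA dB dC)" unfolding UPB_eq using finite_Dset by blast
  have prod: "\<forall>u\<in>UPB_set dA dB dC. product_state dA dB dC u"
    unfolding UPB_eq using mk_product[OF d] by blast
  have orth: "\<forall>u\<in>UPB_set dA dB dC. \<forall>v\<in>UPB_set dA dB dC. u \<noteq> v \<longrightarrow> tinner dA dB dC u v = 0"
    unfolding UPB_eq using mk_orth[OF d] by blast
  have ue: "\<forall>v. product_state dA dB dC v \<longrightarrow> \<not> (\<forall>u\<in>UPB_set dA dB dC. tinner dA dB dC u v = 0)"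
    using unext[OF d] by blast
  have inj: "inj_on (mk dA dB dC) (Dset dA dB dC)"
  proof (rule inj_onI)
    fix D D' assume D: "D \<in> Dset dA dB dC" "D' \<in> Dset dA dB dC" and e: "mk dA dB dC D = mk dA dB dC D'"
    show "D = D'"
    proof (rule ccontr)
      assume "D \<noteq> D'"
      then have "tinner dA dB dC (mk dA dB dC D) (mk dA dB dC D') = 0" using mk_orth[OF d D] by blast
      then show False using mk_self_nz[OF d, of D] e by simp
    qed
  qed
  have "card (UPB_set dA dB dC) = card (Dset dA dB dC)" unfolding UPB_eq by (rule card_image[OF inj])
  also have "\<dots> = dA * dB * dC - 8"
  proof -
    obtain p q r where pqr: "dA = p + 3" "dB = q + 3" "dC = r + 3" using d
      by (metis add.commute le_Suc_ex)
    show ?thesis unfolding card_Dset[OF d] using arith_card[of p r q] unfolding pqr by simp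
  qed
  finally show ?thesis using fin prod orth notspan[OF d] ue unfolding is_UPB_def by blast
qed

end
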